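(* Let $N$ be a simply connected nilpotent Lie group with Lie algebra $\mathfrak n$, $(\delta_t)_{t>0}$ a one-parameter group of dilations given by subspaces $(m_p)_p$, and $M$ a connected closed subgroup of $N$ with Lie algebra $\mathfrak m$. Then the subspace $\mathfrak m_\infty=\lim_{t\to+\infty}\delta_{1/t}(\mathfrak m)$ is a Lie subalgebra of the graded Lie algebra $\mathfrak n_0$.
   Context: Let $C^p(\mathfrak n)$ be the descending central series; choose subspaces $m_p$ with $C^p(\mathfrak n)=m_p\oplus C^{p+1}(\mathfrak n)$, so $\mathfrak n=\bigoplus_p m_p$, and let $\pi_p$ be the projection onto $m_p$. The dilation $\delta_t$ is the linear map acting by $t^p$ on $m_p$. The graded Lie algebra $\mathfrak n_0$ is the vector space $\mathfrak n$ with bracket defined by $[x,y]_0=\pi_{p+q}([x,y])$ for $x\in m_p$, $y\in m_q$ (extended bilinearly). The limit $\mathfrak m_\infty$ is taken in the Grassmannian of $\dim\mathfrak m$-dimensional subspaces of $\mathfrak n$; this limit exists. *)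

theory Defs
  imports "HOL-Analysis.Analysis"
begin

text \<open>A finite-dimensional real Lie algebra structure on a Euclidean space 'a
  (the Euclidean structure is only used to topologise the Grassmannian).\<close>
definition lie_algebra :: "('a::euclidean_space \<Rightarrow> 'a \<Rightarrow> 'a) \<Rightarrow> bool" where
  "lie_algebra br \<longleftrightarrow> bilinear br \<and> (\<forall>x. br x x = 0) \<and>
     (\<forall>x y z. br x (br y z) + br y (br z x) + br z (br x y) = 0)"

definition lie_subalgebra :: "('a::euclidean_space \<Rightarrow> 'a \<Rightarrow> 'a) \<Rightarrow> 'a set \<Rightarrow> bool" where
  "lie_subalgebra br S \<longleftrightarrow> subspace S \<and> (\<forall>x\<in>S. \<forall>y\<in>S. br x y \<in> S)"

fun lcs :: "('a::euclidean_space \<Rightarrow> 'a \<Rightarrow> 'a) \<Rightarrow> nat \<Rightarrow> 'a set" where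
  "lcs br 0 = UNIV"
| "lcs br (Suc 0) = UNIV"
| "lcs br (Suc (Suc p)) = span {br x y | x y. y \<in> lcs br (Suc p)}"

definition nilpotent_lie :: "('a::euclidean_space \<Rightarrow> 'a \<Rightarrow> 'a) \<Rightarrow> bool" where
  "nilpotent_lie br \<longleftrightarrow> lie_algebra br \<and> (\<exists>k. lcs br k = {0})"

definition adapted_grading :: "('a::euclidean_space \<Rightarrow> 'a \<Rightarrow> 'a) \<Rightarrow> (nat \<Rightarrow> 'a set) \<Rightarrow> bool" where
  "adapted_grading br m \<longleftrightarrow> (\<forall>p\<ge>1. subspace (m p) \<and> m p \<subseteq> lcs br p \<and>
      m p \<inter> lcs br (Suc p) = {0} \<and> {x + y | x y. x \<in> m p \<and> y \<in> lcs br (Suc p)} = lcs br p)"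

text \<open>Projection \<pi>_p onto m_p along the other m_q in n = \<Oplus>_{p\<ge>1} m_p.\<close>
definition grade_proj :: "(nat \<Rightarrow> 'a::euclidean_space set) \<Rightarrow> nat \<Rightarrow> 'a \<Rightarrow> 'a" where
  "grade_proj m p x = (THE f. (\<forall>q\<ge>1. f q \<in> m q) \<and> f 0 = 0 \<and> finite {q. f q \<noteq> 0} \<and>
       x = (\<Sum>q\<in>{q. f q \<noteq> 0}. f q)) p"

definition dilation :: "(nat \<Rightarrow> 'a::euclidean_space set) \<Rightarrow> real \<Rightarrow> 'a \<Rightarrow> 'a" where
  "dilation m t x = (\<Sum>p\<in>{p. grade_proj m p x \<noteq> 0}. (t ^ p) *\<^sub>R grade_proj m p x)"

definition graded_bracket :: "('a::euclidean_space \<Rightarrow> 'a \<Rightarrow> 'a) \<Rightarrow> (nat \<Rightarrow> 'a set) \<Rightarrow> 'a \<Rightarrow> 'a \<Rightarrow> 'a" where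
  "graded_bracket br m x y =
     (\<Sum>p\<in>{p. grade_proj m p x \<noteq> 0}. \<Sum>q\<in>{q. grade_proj m q y \<noteq> 0}.
        grade_proj m (p + q) (br (grade_proj m p x) (grade_proj m q y)))"

text \<open>Convergence in the Grassmannian of k-dimensional subspaces, via the usual
  embedding by orthogonal projections.\<close>
definition grass_tendsto :: "nat \<Rightarrow> ('b \<Rightarrow> 'a::euclidean_space set) \<Rightarrow> 'a set \<Rightarrow> 'b filter \<Rightarrow> bool" where
  "grass_tendsto k V W F \<longleftrightarrow> subspace W \<and> dim W = k \<and>
     (\<forall>\<^sub>F t in F. subspace (V t) \<and> dim (V t) = k) \<and>
     (\<forall>x. ((\<lambda>t. closest_point (V t) x) \<longlongrightarrow> closest_point W x) F)"

end

theory Submission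
  imports Defs
begin

locale gr =
  fixes br :: "'a::euclidean_space \<Rightarrow> 'a \<Rightarrow> 'a" and m :: "nat \<Rightarrow> 'a set" and K :: nat
  assumes lie: "lie_algebra br" and ag: "adapted_grading br m"
    and K0: "lcs br K = {0}" and K1: "K \<ge> 1"
begin

lemma bil: "bilinear br" using lie by (simp add: lie_algebra_def)
lemma alt: "br x x = 0" using lie by (simp add: lie_algebra_def)
lemma jac: "br x (br y z) + br y (br z x) + br z (br x y) = 0"
  using lie by (simp add: lie_algebra_def)

lemma anti: "br x y = - br y x"
proof -
  have "br (x+y) (x+y) = 0" by (rule alt)
  hence "br x x + br y x + (br x y + br y y) = 0"
    by (simp add: bilinear_ladd[OF bil] bilinear_radd[OF bil])
  hence "br x y + br y x = 0" by (simp only: alt) (simp add: algebra_simps)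
  thus ?thesis by (simp add: eq_neg_iff_add_eq_0)
qed

lemma lcs_sub: "subspace (lcs br p)"
  by (induction br p rule: lcs.induct) (auto simp: subspace_UNIV subspace_span)

lemma lcs_Suc: "lcs br (Suc p) \<subseteq> lcs br p"
proof (induction p)
  case 0 then show ?case by simp
next
  case (Suc p)
  show ?case
  proof (cases p)
    case 0 then show ?thesis by simp
  next
    case (Suc p')
    with Suc.IH show ?thesis by (auto intro!: span_mono)
  qed
qed

lemma lcs_anti: "p \<le> q \<Longrightarrow> lcs br q \<subseteq> lcs br p"
  using lift_Suc_antimono_le[of "lcs br", OF lcs_Suc] by blast

lemma br_lcs: "p \<ge> 1 \<Longrightarrow> y \<in> lcs br p \<Longrightarrow> br x y \<in> lcs br (Suc p)"
  by (cases p) (auto intro: span_base)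

lemma br_lcs2: "\<forall>q\<ge>1. \<forall>a\<in>lcs br (Suc p). \<forall>b\<in>lcs br q. br a b \<in> lcs br (Suc p + q)"
proof (induction p)
  case 0 then show ?case using br_lcs by simp
next
  case (Suc p)
  show ?case
  proof (intro allI impI ballI)
    fix q a b assume q: "q \<ge> (1::nat)" and a: "a \<in> lcs br (Suc (Suc p))" and b: "b \<in> lcs br q"
    have a': "a \<in> span {br u v | u v. v \<in> lcs br (Suc p)}" using a by simp
    have sub: "subspace (Collect (\<lambda>a. br a b \<in> lcs br (Suc (Suc p) + q)))"
      using lcs_sub[of "Suc (Suc p) + q"]
      by (auto simp: subspace_def bilinear_ladd[OF bil] bilinear_lmul[OF bil] bilinear_lzero[OF bil])
    have gen: "br x b \<in> lcs br (Suc (Suc p) + q)" if "x \<in> {br u v | u v. v \<in> lcs br (Suc p)}" for x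
    proof -
      from that obtain u v where x: "x = br u v" and v: "v \<in> lcs br (Suc p)" by blast
      have e: "br (br u v) b = br u (br v b) + br v (br b u)"
        using jac[of u v b] anti[of b "br u v"]
        by (metis add.commute add_eq_0_iff neg_eq_iff_add_eq_0)
      have 1: "br v b \<in> lcs br (Suc p + q)" using Suc.IH q v b by blast
      have 2: "br u (br v b) \<in> lcs br (Suc (Suc p) + q)"
        using br_lcs[OF _ 1, of u] by simp
      have "br u b \<in> lcs br (Suc q)" using br_lcs q b by blast
      hence "br b u \<in> lcs br (Suc q)" using anti[of b u] lcs_sub subspace_neg by metis
      hence 3: "br v (br b u) \<in> lcs br (Suc (Suc p) + q)"
        using Suc.IH v by fastforce
      show ?thesis using x e 2 3 lcs_sub subspace_add by metis
    qed
    show "br a b \<in> lcs br (Suc (Suc p) + q)"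
      using span_induct[OF a' sub] gen by blast
  qed
qed

lemma br_lcs3: "p \<ge> 1 \<Longrightarrow> q \<ge> 1 \<Longrightarrow> a \<in> lcs br p \<Longrightarrow> b \<in> lcs br q \<Longrightarrow> br a b \<in> lcs br (p + q)"
  using br_lcs2[of "p - 1"] by auto


lemma m_sub: "p \<ge> 1 \<Longrightarrow> subspace (m p)" "p \<ge> 1 \<Longrightarrow> m p \<subseteq> lcs br p"
  "p \<ge> 1 \<Longrightarrow> m p \<inter> lcs br (Suc p) = {0}"
  "p \<ge> 1 \<Longrightarrow> {x + y | x y. x \<in> m p \<and> y \<in> lcs br (Suc p)} = lcs br p"
  using ag unfolding adapted_grading_def by (simp only:)+

lemma lcs_K: "p \<ge> K \<Longrightarrow> lcs br p = {0}"
proof -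
  assume "p \<ge> K"
  have "0 \<in> lcs br p" by (rule subspace_0[OF lcs_sub])
  thus ?thesis using lcs_anti[OF \<open>p \<ge> K\<close>] K0 by auto
qed

lemma exists_dec: "\<forall>p. K - p = n \<longrightarrow> p \<ge> 1 \<longrightarrow> (\<forall>x\<in>lcs br p. \<exists>f. (\<forall>q\<ge>1. f q \<in> m q) \<and>
   (\<forall>q<p. f q = 0) \<and> (\<forall>q\<ge>K. f q = 0) \<and> x = (\<Sum>q<K. f q))"
proof (induction n)
  case 0
  show ?case
  proof (intro allI impI ballI)
    fix p x assume "K - p = 0" "(1::nat) \<le> p" "x \<in> lcs br p"
    hence "x = 0" using lcs_K by auto
    thus "\<exists>f. (\<forall>q\<ge>1. f q \<in> m q) \<and> (\<forall>q<p. f q = 0) \<and> (\<forall>q\<ge>K. f q = 0) \<and> x = (\<Sum>q<K. f q)"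
    proof (intro exI[of _ "\<lambda>_. 0"] conjI allI impI)
      fix q :: nat assume "q \<ge> 1" thus "(0::'a) \<in> m q" using m_sub(1) subspace_0 by metis
    qed (simp_all add: \<open>x = 0\<close>)
  qed
next
  case (Suc n)
  show ?case
  proof (intro allI impI ballI)
    fix p x assume kp: "K - p = Suc n" and p1: "(1::nat) \<le> p" and x: "x \<in> lcs br p"
    obtain a y where a: "a \<in> m p" and y: "y \<in> lcs br (Suc p)" and xay: "x = a + y"
      using x m_sub(4)[OF p1] by blast
    have kp': "K - Suc p = n" using kp by simp
    have ex: "\<exists>g. (\<forall>q\<ge>1. g q \<in> m q) \<and> (\<forall>q<Suc p. g q = 0) \<and> (\<forall>q\<ge>K. g q = 0) \<and> y = (\<Sum>q<K. g q)"
      by (rule Suc.IH[rule_format, OF kp' _ y]) simp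
    then obtain g where g: "\<forall>q\<ge>1. g q \<in> m q" "\<forall>q<Suc p. g q = 0" "\<forall>q\<ge>K. g q = 0" "y = (\<Sum>q<K. g q)"
      by blast
    have pK: "p < K" using kp by simp
    have "(\<Sum>q<K. (g(p := a)) q) = (g(p := a)) p + (\<Sum>q\<in>{..<K} - {p}. (g(p := a)) q)"
      using pK by (intro sum.remove) auto
    also have "\<dots> = a + (\<Sum>q\<in>{..<K} - {p}. g q)" by simp
    also have "(\<Sum>q\<in>{..<K} - {p}. g q) = g p + (\<Sum>q\<in>{..<K} - {p}. g q)" using g(2) by simp
    also have "\<dots> = (\<Sum>q<K. g q)" using pK by (intro sum.remove[symmetric]) auto
    finally have "(\<Sum>q<K. (g(p := a)) q) = a + (\<Sum>q<K. g q)" .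
    thus "\<exists>f. (\<forall>q\<ge>1. f q \<in> m q) \<and> (\<forall>q<p. f q = 0) \<and> (\<forall>q\<ge>K. f q = 0) \<and> x = (\<Sum>q<K. f q)"
    proof (intro exI[of _ "g(p := a)"] conjI allI impI)
      fix q :: nat assume "q \<ge> 1" thus "(g(p := a)) q \<in> m q" using g(1) a by simp
    next
      fix q assume "q < p" thus "(g(p := a)) q = 0" using g(2) by simp
    next
      fix q assume "q \<ge> K" thus "(g(p := a)) q = 0" using g(3) pK by simp
    next
      show "x = (\<Sum>q<K. (g(p := a)) q)" using xay g(4) \<open>(\<Sum>q<K. (g(p := a)) q) = a + (\<Sum>q<K. g q)\<close> by simp
    qed
  qed
qed

lemma uniq:
  assumes h: "\<forall>q\<ge>1. h q \<in> m q" and h0: "h 0 = 0" and S: "finite S"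
    and hs: "(\<Sum>q\<in>S. h q) = 0" and sup: "{q. h q \<noteq> 0} \<subseteq> S"
  shows "h q = 0"
proof (induction q rule: less_induct)
  case (less q)
  show ?case
  proof (cases "q = 0 \<or> q \<notin> S")
    case True then show ?thesis using h0 sup by auto
  next
    case False
    hence q1: "q \<ge> 1" and qS: "q \<in> S" by auto
    have rest: "(\<Sum>q'\<in>S - {q}. h q') \<in> lcs br (Suc q)"
    proof (rule subspace_sum[OF lcs_sub])
      fix q' assume q': "q' \<in> S - {q}"
      show "h q' \<in> lcs br (Suc q)"
      proof (cases "q' < q")
        case True then show ?thesis using less.IH lcs_sub subspace_0 by metis
      next
        case False
        hence "Suc q \<le> q'" using q' by auto
        moreover have "h q' \<in> m q'" using h \<open>Suc q \<le> q'\<close> by auto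
        hence "h q' \<in> lcs br q'" using m_sub(2)[of q'] \<open>Suc q \<le> q'\<close> by auto
        ultimately show ?thesis using lcs_anti[of "Suc q" q'] by blast
      qed
    qed
    have "h q + (\<Sum>q'\<in>S - {q}. h q') = 0" using hs sum.remove[OF S qS, of h] by simp
    hence "h q = - (\<Sum>q'\<in>S - {q}. h q')" by (simp add: eq_neg_iff_add_eq_0)
    hence "h q \<in> lcs br (Suc q)" using rest lcs_sub subspace_neg by metis
    moreover have "h q \<in> m q" using h q1 by auto
    ultimately show ?thesis using m_sub(3)[OF q1] by blast
  qed
qed

lemma decomp:
  assumes f: "\<forall>q\<ge>1. f q \<in> m q" and f0: "f 0 = 0" and S: "finite S"
    and sup: "{q. f q \<noteq> 0} \<subseteq> S" and x: "x = (\<Sum>q\<in>S. f q)"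
  shows "grade_proj m p x = f p"
proof -
  let ?Q = "\<lambda>g. (\<forall>q\<ge>1. g q \<in> m q) \<and> g 0 = 0 \<and> finite {q. g q \<noteq> 0} \<and>
       x = (\<Sum>q\<in>{q. g q \<noteq> 0}. g q)"
  have fin: "finite {q. f q \<noteq> 0}" using S sup finite_subset by blast
  have "(\<Sum>q\<in>{q. f q \<noteq> 0}. f q) = (\<Sum>q\<in>S. f q)"
    by (rule sum.mono_neutral_left[OF S sup]) blast
  hence xf: "x = (\<Sum>q\<in>{q. f q \<noteq> 0}. f q)" using x by simp
  have "(THE g. ?Q g) = f"
  proof (rule the_equality)
    show "?Q f" using f f0 fin xf by blast
  next
    fix g assume g: "?Q g"
    let ?T = "{q. g q \<noteq> 0} \<union> S"
    have gfin: "finite {q. g q \<noteq> 0}" using g by blast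
    have T: "finite ?T" using gfin S by blast
    have "(\<Sum>q\<in>{q. g q \<noteq> 0}. g q) = (\<Sum>q\<in>?T. g q)"
      by (rule sum.mono_neutral_left[OF T]) blast+
    hence gx: "(\<Sum>q\<in>?T. g q) = x" using g by simp
    have "(\<Sum>q\<in>S. f q) = (\<Sum>q\<in>?T. f q)"
      by (rule sum.mono_neutral_left[OF T]) (use sup in blast)+
    hence fx: "(\<Sum>q\<in>?T. f q) = x" using x by simp
    have hs: "(\<Sum>q\<in>?T. g q - f q) = 0" using gx fx by (simp add: sum_subtractf)
    have hm: "\<forall>q\<ge>1. g q - f q \<in> m q"
    proof (intro allI impI)
      fix q :: nat assume q: "q \<ge> 1"
      have "g q \<in> m q" using g q by blast
      moreover have "f q \<in> m q" using f q by blast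
      ultimately show "g q - f q \<in> m q" using subspace_diff m_sub(1)[OF q] by blast
    qed
    have h0: "g 0 - f 0 = 0" using g f0 by simp
    have hsup: "{q. g q - f q \<noteq> 0} \<subseteq> ?T" using sup by auto
    have "g q - f q = 0" for q
      by (rule uniq[of "\<lambda>q. g q - f q" ?T, OF hm h0 T hs hsup])
    thus "g = f" by (simp add: fun_eq_iff)
  qed
  thus ?thesis unfolding grade_proj_def by simp
qed


abbreviation P where "P \<equiv> grade_proj m"

lemma supK: "(\<And>q. q \<ge> K \<Longrightarrow> f q = 0) \<Longrightarrow> {q. f q \<noteq> 0} \<subseteq> {..<K}"
proof
  fix q assume h: "\<And>q. q \<ge> K \<Longrightarrow> f q = 0" and q: "q \<in> {q. f q \<noteq> 0}"
  show "q \<in> {..<K}"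
  proof (rule ccontr)
    assume "q \<notin> {..<K}" hence "q \<ge> K" by simp
    thus False using h q by simp
  qed
qed

lemma P_props: "\<And>q. q \<ge> 1 \<Longrightarrow> P q x \<in> m q" "P 0 x = 0" "\<And>q. q \<ge> K \<Longrightarrow> P q x = 0"
  "x = (\<Sum>q<K. P q x)"
proof -
  have "x \<in> lcs br 1" by simp
  then obtain f where f: "\<forall>q\<ge>1. f q \<in> m q" "\<forall>q<1. f q = 0" "\<forall>q\<ge>K. f q = 0" "x = (\<Sum>q<K. f q)"
    using exists_dec[where n="K - 1", rule_format, of 1 x] by auto
  have fsup: "{q. f q \<noteq> 0} \<subseteq> {..<K}" using f(3) by (intro supK) auto
  have e: "P q x = f q" for q
    by (rule decomp[OF f(1) _ _ fsup f(4)]) (use f(2) in auto)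
  show "\<And>q. q \<ge> 1 \<Longrightarrow> P q x \<in> m q" using e f(1) by simp
  show "P 0 x = 0" using e f(2) by simp
  show "\<And>q. q \<ge> K \<Longrightarrow> P q x = 0" using e f(3) by simp
  show "x = (\<Sum>q<K. P q x)" using e f(4) by simp
qed

lemma P_lcs: "s \<ge> 1 \<Longrightarrow> z \<in> lcs br s \<Longrightarrow> r < s \<Longrightarrow> P r z = 0"
proof -
  assume s: "s \<ge> 1" and z: "z \<in> lcs br s" and r: "r < s"
  obtain f where f: "\<forall>q\<ge>1. f q \<in> m q" "\<forall>q<s. f q = 0" "\<forall>q\<ge>K. f q = 0" "z = (\<Sum>q<K. f q)"
    using exists_dec[where n="K - s", rule_format, of s z] s z by auto
  have fsup: "{q. f q \<noteq> 0} \<subseteq> {..<K}" using f(3) by (intro supK) auto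
  have "P r z = f r"
    by (rule decomp[OF f(1) _ _ fsup f(4)]) (use f(2) s in auto)
  thus ?thesis using f(2) r by simp
qed

lemma m_in: "a \<in> m p \<Longrightarrow> p \<ge> 1 \<Longrightarrow> P q a = (if q = p then a else 0)"
proof -
  assume a: "a \<in> m p" and p: "p \<ge> 1"
  let ?f = "\<lambda>q. if q = p then a else (0::'a)"
  have f1: "\<forall>q\<ge>1. ?f q \<in> m q" using a m_sub(1) subspace_0 by auto
  show ?thesis
    by (rule decomp[of ?f "{p}"]) (use f1 p in auto)
qed

lemma P_lin: "linear (P q)"
proof (rule linearI)
  fix x y
  let ?f = "\<lambda>q. P q x + P q y"
  have f1: "\<forall>q\<ge>1. ?f q \<in> m q" using P_props(1) m_sub(1) subspace_add by blast
  show "P q (x + y) = P q x + P q y"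
  proof (rule decomp[of ?f "{..<K}"])
    show "x + y = (\<Sum>q<K. ?f q)" using P_props(4)[of x] P_props(4)[of y] by (simp add: sum.distrib)
    show "{q. ?f q \<noteq> 0} \<subseteq> {..<K}" by (rule supK) (simp add: P_props(3))
  qed (use f1 P_props(2) in auto)
next
  fix c x
  let ?f = "\<lambda>q. c *\<^sub>R P q x"
  have f1: "\<forall>q\<ge>1. ?f q \<in> m q" using P_props(1) m_sub(1) subspace_scale by blast
  show "P q (c *\<^sub>R x) = c *\<^sub>R P q x"
  proof (rule decomp[of ?f "{..<K}"])
    show "c *\<^sub>R x = (\<Sum>q<K. ?f q)" using P_props(4)[of x] by (metis scaleR_right.sum)
    show "{q. ?f q \<noteq> 0} \<subseteq> {..<K}" by (rule supK) (simp add: P_props(3))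
  qed (use f1 P_props(2) in auto)
qed

lemma P0: "P q 0 = 0" using linear_0[OF P_lin] .

lemma PP: "P q (P p x) = (if q = p then P p x else 0)"
proof (cases "p = 0")
  case True then show ?thesis using P_props(2) P0 by simp
next
  case False
  then show ?thesis using m_in[OF P_props(1)] by simp
qed

lemma dil_eq: "dilation m t x = (\<Sum>p<K. t ^ p *\<^sub>R P p x)"
  unfolding dilation_def
  by (rule sum.mono_neutral_left) (use supK[OF P_props(3)] in auto)

lemma gb_eq: "graded_bracket br m x y = (\<Sum>p<K. \<Sum>q<K. P (p + q) (br (P p x) (P q y)))"
proof -
  have inner: "(\<Sum>q\<in>{q. P q y \<noteq> 0}. P (p + q) (br (P p x) (P q y))) =
     (\<Sum>q<K. P (p + q) (br (P p x) (P q y)))" for p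
    by (rule sum.mono_neutral_left) (use supK[OF P_props(3)] in \<open>auto simp: bilinear_rzero[OF bil] P0\<close>)
  have "graded_bracket br m x y = (\<Sum>p\<in>{p. P p x \<noteq> 0}. \<Sum>q<K. P (p + q) (br (P p x) (P q y)))"
    unfolding graded_bracket_def using inner by simp
  also have "\<dots> = (\<Sum>p<K. \<Sum>q<K. P (p + q) (br (P p x) (P q y)))"
    by (rule sum.mono_neutral_left) (use supK[OF P_props(3)] in \<open>auto simp: bilinear_lzero[OF bil] P0\<close>)
  finally show ?thesis .
qed

lemma P_dil: "P q (dilation m t x) = t ^ q *\<^sub>R P q x"
proof -
  have "P q (dilation m t x) = (\<Sum>p<K. t ^ p *\<^sub>R P q (P p x))"
    unfolding dil_eq by (simp add: linear_sum[OF P_lin] linear_scale[OF P_lin])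
  also have "\<dots> = (\<Sum>p<K. if q = p then t ^ q *\<^sub>R P q x else 0)"
    by (rule sum.cong) (auto simp: PP)
  also have "\<dots> = t ^ q *\<^sub>R P q x"
    using P_props(3)[of q x] by (auto simp: sum.delta)
  finally show ?thesis .
qed

lemma dil_comp: "dilation m s (dilation m t x) = dilation m (s * t) x"
  unfolding dil_eq[of s "dilation m t x"] P_dil by (simp add: dil_eq power_mult_distrib)

lemma dil_1: "dilation m 1 x = x"
  using P_props(4)[of x] by (simp add: dil_eq)

lemma linL: "linear (\<lambda>x. br x y)" using bil by (simp add: bilinear_def)
lemma linR: "linear (\<lambda>y. br x y)" using bil by (simp add: bilinear_def)

lemma br_sum: "br (sum f A) (sum g B) = (\<Sum>p\<in>A. \<Sum>q\<in>B. br (f p) (g q))"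
  by (simp add: linear_sum[OF linL] linear_sum[OF linR] o_def) (rule sum.swap)

lemma dil_br: "dilation m s (br (dilation m t a) (dilation m t b)) =
   (\<Sum>r<K. \<Sum>p<K. \<Sum>q<K. (s ^ r * t ^ p * t ^ q) *\<^sub>R P r (br (P p a) (P q b)))"
  unfolding dil_eq[of s] dil_eq[of t] br_sum
  by (simp add: bilinear_lmul[OF bil] bilinear_rmul[OF bil] linear_sum[OF P_lin]
      linear_scale[OF P_lin] scaleR_sum_right mult_ac)


lemma zero_term: "r < p + q \<Longrightarrow> P r (br (P p a) (P q b)) = 0"
proof (cases "p = 0 \<or> q = 0")
  case True
  then show ?thesis using P_props(2) P0 bilinear_lzero[OF bil] bilinear_rzero[OF bil] by auto
next
  case False
  assume r: "r < p + q"
  have p: "p \<ge> 1" and q: "q \<ge> 1" using False by auto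
  have "P p a \<in> lcs br p" using P_props(1)[OF p] m_sub(2)[OF p] by blast
  moreover have "P q b \<in> lcs br q" using P_props(1)[OF q] m_sub(2)[OF q] by blast
  ultimately have "br (P p a) (P q b) \<in> lcs br (p + q)" using br_lcs3 p q by blast
  thus ?thesis using P_lcs r p by simp
qed

lemma coef: "(t::real) \<noteq> 0 \<Longrightarrow> p + q \<le> r \<Longrightarrow> (1/t)^r * t^p * t^q = (1/t)^(r - (p + q))"
proof -
  assume t: "t \<noteq> 0" and r: "p + q \<le> r"
  have "(1/t)^r = (1/t)^(r - (p + q)) * (1/t)^(p + q)"
    using r by (simp add: power_add[symmetric])
  moreover have "(1/t)^(p+q) * t^p * t^q = 1"
    using t by (simp add: power_add power_one_over field_simps)
  ultimately show ?thesis by (simp add: mult.assoc)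
qed

lemma blP: "bounded_linear (P k)" using P_lin linear_conv_bounded_linear by blast
lemma bbr: "bounded_bilinear br" using bil bilinear_conv_bounded_bilinear by blast

lemma term_lim:
  fixes u v :: "real \<Rightarrow> 'a"
  assumes u: "(u \<longlongrightarrow> x) at_top" and v: "(v \<longlongrightarrow> y) at_top"
  shows "((\<lambda>t. ((1/t)^r * t^p * t^q) *\<^sub>R P r (br (P p (u t)) (P q (v t)))) \<longlongrightarrow>
     (if r = p + q then P r (br (P p x) (P q y)) else 0)) at_top"
proof -
  have cont: "((\<lambda>t. P r (br (P p (u t)) (P q (v t)))) \<longlongrightarrow> P r (br (P p x) (P q y))) at_top"
    by (intro bounded_linear.tendsto[OF blP] bounded_bilinear.tendsto[OF bbr] u v)
  have evt: "\<forall>\<^sub>F t in at_top. (t::real) \<noteq> 0" using eventually_gt_at_top[of 0] by (auto elim: eventually_mono)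
  consider "r < p + q" | "r = p + q" | "r > p + q" by linarith
  then show ?thesis
  proof cases
    case 1 then show ?thesis by (simp add: zero_term)
  next
    case 2
    have "\<forall>\<^sub>F t in at_top. ((1/t)^r * t^p * t^q) *\<^sub>R P r (br (P p (u t)) (P q (v t))) =
        P r (br (P p (u t)) (P q (v t)))"
      using evt by (rule eventually_mono) (use coef 2 in simp)
    then show ?thesis using cont 2 by (simp add: tendsto_cong)
  next
    case 3
    have E: "\<forall>\<^sub>F t in at_top. ((1/t)^r * t^p * t^q) *\<^sub>R P r (br (P p (u t)) (P q (v t))) =
        (1/t)^(r - (p + q)) *\<^sub>R P r (br (P p (u t)) (P q (v t)))"
      using evt by (rule eventually_mono) (use coef 3 in simp)
    have "((\<lambda>t::real. (1/t)^(r - (p + q))) \<longlongrightarrow> 0) at_top"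
    proof -
      have "((\<lambda>t::real. 1/t) \<longlongrightarrow> 0) at_top"
        using tendsto_inverse_0_at_top[OF filterlim_ident] by (simp add: inverse_eq_divide)
      hence "((\<lambda>t::real. (1/t)^(r - (p + q))) \<longlongrightarrow> 0 ^ (r - (p + q))) at_top" by (rule tendsto_power)
      moreover have "(0::real) ^ (r - (p + q)) = 0" using 3 by simp
      ultimately show ?thesis by (simp only:)
    qed
    hence "((\<lambda>t. (1/t)^(r - (p + q)) *\<^sub>R P r (br (P p (u t)) (P q (v t)))) \<longlongrightarrow>
        0 *\<^sub>R P r (br (P p x) (P q y))) at_top"
      by (rule tendsto_scaleR[OF _ cont])
    hence "((\<lambda>t. ((1/t)^r * t^p * t^q) *\<^sub>R P r (br (P p (u t)) (P q (v t)))) \<longlongrightarrow>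
        0 *\<^sub>R P r (br (P p x) (P q y))) at_top"
      using tendsto_cong[OF E] by blast
    moreover have "(if r = p + q then P r (br (P p x) (P q y)) else 0) = 0 *\<^sub>R P r (br (P p x) (P q y))"
      using 3 by simp
    ultimately show ?thesis by (simp only:)
  qed
qed

lemma sum_L: "(\<Sum>r<K. \<Sum>p<K. \<Sum>q<K. (if r = p + q then P r (br (P p x) (P q y)) else 0)) =
   graded_bracket br m x y"
proof -
  have "(\<Sum>r<K. \<Sum>p<K. \<Sum>q<K. (if r = p + q then P r (br (P p x) (P q y)) else 0)) =
      (\<Sum>p<K. \<Sum>r<K. \<Sum>q<K. (if r = p + q then P r (br (P p x) (P q y)) else 0))"
    by (rule sum.swap)
  also have "\<dots> = (\<Sum>p<K. \<Sum>q<K. \<Sum>r<K. (if r = p + q then P r (br (P p x) (P q y)) else 0))"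
    by (rule sum.cong[OF refl], rule sum.swap)
  also have "\<dots> = (\<Sum>p<K. \<Sum>q<K. P (p + q) (br (P p x) (P q y)))"
  proof (intro sum.cong refl)
    fix p q
    show "(\<Sum>r<K. (if r = p + q then P r (br (P p x) (P q y)) else 0)) = P (p + q) (br (P p x) (P q y))"
      using P_props(3)[of "p + q"] by (auto simp: sum.delta' not_less)
  qed
  finally show ?thesis by (simp add: gb_eq)
qed

lemma main:
  assumes sa: "lie_subalgebra br mm"
    and gt: "grass_tendsto (dim mm) (\<lambda>t. dilation m (1 / t) ` mm) W at_top"
  shows "lie_subalgebra (graded_bracket br m) W"
proof -
  define V where "V t = dilation m (1/t) ` mm" for t :: real
  have Wsub: "subspace W" using gt unfolding grass_tendsto_def by blast
  have evV: "\<forall>\<^sub>F t in at_top. subspace (V t)"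
    using gt unfolding grass_tendsto_def V_def by (auto elim: eventually_mono)
  have lim: "((\<lambda>t. closest_point (V t) z) \<longlongrightarrow> closest_point W z) at_top" for z
    using gt unfolding grass_tendsto_def V_def by blast
  have Wcl: "closed W" using Wsub closed_subspace by blast
  have Wne: "W \<noteq> {}" using Wsub subspace_0 by blast
  have mmsub: "subspace mm" and mmbr: "\<And>a b. a \<in> mm \<Longrightarrow> b \<in> mm \<Longrightarrow> br a b \<in> mm"
    using sa unfolding lie_subalgebra_def by auto
  have ev: "\<forall>\<^sub>F t in at_top. t > 0 \<and> subspace (V t)"
    using eventually_conj[OF eventually_gt_at_top[of 0] evV] .
  show ?thesis unfolding lie_subalgebra_def
  proof (intro conjI ballI Wsub)
    fix x y assume x: "x \<in> W" and y: "y \<in> W"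
    define xt where "xt t = closest_point (V t) x" for t
    define yt where "yt t = closest_point (V t) y" for t
    have xl: "(xt \<longlongrightarrow> x) at_top" using lim[of x] closest_point_self[OF x] unfolding xt_def by simp
    have yl: "(yt \<longlongrightarrow> y) at_top" using lim[of y] closest_point_self[OF y] unfolding yt_def by simp
    define zt where "zt t = dilation m (1/t) (br (dilation m t (xt t)) (dilation m t (yt t)))" for t
    let ?z = "graded_bracket br m x y"
    have hback: "dilation m t (dilation m (1/t) a) = a" if "t > 0" for t a
      using that by (simp add: dil_comp dil_1)
    have zin: "\<forall>\<^sub>F t in at_top. zt t \<in> V t \<and> closed (V t)"
      using ev
    proof (rule eventually_mono)
      fix t :: real assume t: "t > 0 \<and> subspace (V t)"
      have cl: "closed (V t)" using t closed_subspace by blast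
      have ne: "V t \<noteq> {}" using t subspace_0 by blast
      have "xt t \<in> V t" unfolding xt_def using closest_point_in_set[OF cl ne] .
      then obtain a where a: "a \<in> mm" "xt t = dilation m (1/t) a" unfolding V_def by blast
      have "yt t \<in> V t" unfolding yt_def using closest_point_in_set[OF cl ne] .
      then obtain b where b: "b \<in> mm" "yt t = dilation m (1/t) b" unfolding V_def by blast
      have "zt t = dilation m (1/t) (br a b)" unfolding zt_def a(2) b(2) using hback t by simp
      thus "zt t \<in> V t \<and> closed (V t)" using mmbr[OF a(1) b(1)] cl unfolding V_def by blast
    qed
    have zl: "(zt \<longlongrightarrow> ?z) at_top"
    proof -
      have "((\<lambda>t. \<Sum>r<K. \<Sum>p<K. \<Sum>q<K. ((1/t)^r * t^p * t^q) *\<^sub>R P r (br (P p (xt t)) (P q (yt t))))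
         \<longlongrightarrow> (\<Sum>r<K. \<Sum>p<K. \<Sum>q<K. (if r = p + q then P r (br (P p x) (P q y)) else 0))) at_top"
        by (intro tendsto_sum term_lim xl yl)
      thus ?thesis unfolding sum_L zt_def dil_br .
    qed
    have "\<forall>\<^sub>F t in at_top. norm (dist (closest_point (V t) ?z) ?z) \<le> dist (zt t) ?z"
      using zin
    proof (rule eventually_mono)
      fix t assume "zt t \<in> V t \<and> closed (V t)"
      thus "norm (dist (closest_point (V t) ?z) ?z) \<le> dist (zt t) ?z"
        using closest_point_le[of "V t" "zt t" ?z] by (simp add: dist_commute)
    qed
    moreover have "((\<lambda>t. dist (zt t) ?z) \<longlongrightarrow> 0) at_top" using zl tendsto_dist_iff by blast
    ultimately have "((\<lambda>t. dist (closest_point (V t) ?z) ?z) \<longlongrightarrow> 0) at_top"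
      by (rule Lim_null_comparison)
    hence "((\<lambda>t. closest_point (V t) ?z) \<longlongrightarrow> ?z) at_top" using tendsto_dist_iff by blast
    hence "closest_point W ?z = ?z" using lim[of ?z] tendsto_unique trivial_limit_at_top_linorder by blast
    thus "?z \<in> W" using closest_point_in_set[OF Wcl Wne, of ?z] by simp
  qed
qed

end

theorem lemma2p16:
  fixes br :: "'a::euclidean_space \<Rightarrow> 'a \<Rightarrow> 'a"
    and m :: "nat \<Rightarrow> 'a set"
    and mm :: "'a set"
    and m_inf :: "'a set"
  assumes "nilpotent_lie br"
    and "adapted_grading br m"
    and "lie_subalgebra br mm"
    and "grass_tendsto (dim mm) (\<lambda>t. dilation m (1 / t) ` mm) m_inf at_top"
  shows "lie_subalgebra (graded_bracket br m) m_inf"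
proof -
  obtain k where k: "lcs br k = {0}" and lie: "lie_algebra br"
    using assms(1) unfolding nilpotent_lie_def by blast
  define K where "K = max k 1"
  have K0: "lcs br K = {0}"
  proof (cases "k = 0")
    case True
    then show ?thesis using k by (simp add: K_def)
  next
    case False
    hence "K = k" by (simp add: K_def)
    then show ?thesis using k by simp
  qed
  interpret g: gr br m K
    by unfold_locales (use lie assms(2) K0 in \<open>auto simp: K_def\<close>)
  show ?thesis by (rule g.main[OF assms(3,4)])
qed

end
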